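(* Let $n\ge 2$ be an integer, $k,c_b>0$, $\rho_0>0$, and let $\lambda_{1,0}\le\cdots\le\lambda_{n,0}$ be real numbers. Consider the system $$\lambda_i'=-\lambda_i^2+\frac{k}{n}(\rho-c_b)\ (i=1,\dots,n),\qquad \rho'=-\rho\lambda,\quad \lambda=\sum_{i=1}^n\lambda_i,\qquad \rho(0)=\rho_0,\ \lambda_i(0)=\lambda_{i,0},$$ suppose its maximal interval of existence is $[0,t_B)$ with $0<t_B<\infty$, and let $u_i(t)=e^{\int_0^t\lambda_i(s)\,ds}$. Let $1\le J_1\le J_2\le n$ be integers such that $\lim_{t\to t_B^-}\lambda_i(t)=-\infty$ for $1\le i\le J_1$ and $\lim_{t\to t_B^-}\lambda_i(t)=+\infty$ for $J_2<i\le n$. Then $\lambda_{i,0}=\lambda_{j,0}$ and $\lambda_i(t)=\lambda_j(t)$ for all $t$ whenever $1\le i,j\le J_1$; $\lim_{t\to t_B^-}\lambda_i(t)/\lambda_j(t)=1$ whenever $J_2<i,j\le n$; and $$\lim_{t\to t_B^-}\frac{u_j(t)}{u_n(t)}=\frac{\lambda_{j,0}-\lambda_{1,0}}{\lambda_{n,0}-\lambda_{1,0}}\qquad\text{for } J_2<j<n.$$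
   Context: Solutions are real-valued and continuously differentiable on $[0,t_B)$. *)

theory Defs
  imports "HOL-Analysis.Analysis"
begin

definition is_solution ::
  "nat \<Rightarrow> real \<Rightarrow> real \<Rightarrow> real \<Rightarrow> (nat \<Rightarrow> real) \<Rightarrow> real
     \<Rightarrow> (nat \<Rightarrow> real \<Rightarrow> real) \<Rightarrow> (real \<Rightarrow> real) \<Rightarrow> bool" where
  "is_solution n k cb rho0 lam0 T lam rho \<longleftrightarrow>
     0 < T \<and>
     rho 0 = rho0 \<and> (\<forall>i\<in>{1..n}. lam i 0 = lam0 i) \<and>
     (\<forall>i\<in>{1..n}. continuous_on {0..<T} (\<lambda>t. - ((lam i t) ^ 2) + (k / real n) * (rho t - cb))) \<and>
     continuous_on {0..<T} (\<lambda>t. - rho t * (\<Sum>i=1..n. lam i t)) \<and>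
     (\<forall>t\<in>{0..<T}.
        (\<forall>i\<in>{1..n}. (lam i has_real_derivative
            (- ((lam i t) ^ 2) + (k / real n) * (rho t - cb))) (at t within {0..<T})) \<and>
        (rho has_real_derivative (- rho t * (\<Sum>i=1..n. lam i t))) (at t within {0..<T}))"

definition maximal_solution ::
  "nat \<Rightarrow> real \<Rightarrow> real \<Rightarrow> real \<Rightarrow> (nat \<Rightarrow> real) \<Rightarrow> real
     \<Rightarrow> (nat \<Rightarrow> real \<Rightarrow> real) \<Rightarrow> (real \<Rightarrow> real) \<Rightarrow> bool" where
  "maximal_solution n k cb rho0 lam0 T lam rho \<longleftrightarrow>
     is_solution n k cb rho0 lam0 T lam rho \<and>
     \<not> (\<exists>T' > T. \<exists>mu sigma. is_solution n k cb rho0 lam0 T' mu sigma)"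

definition u_fun :: "(nat \<Rightarrow> real \<Rightarrow> real) \<Rightarrow> nat \<Rightarrow> real \<Rightarrow> real" where
  "u_fun lam i t = exp (integral {0..t} (lam i))"

end

theory Submission
  imports Defs
begin


lemma intder:
  fixes f :: "real \<Rightarrow> real"
  assumes "continuous_on {0..<T} f" "x \<in> {0<..<T}"
  shows "((\<lambda>t. integral {0..t} f) has_real_derivative f x) (at x)"
proof -
  define b where "b = (x + T) / 2"
  have xb: "0 < x" "x < b" "b < T" using assms(2) by (auto simp: b_def)
  have "continuous_on {0..b} f" using assms(1) by (rule continuous_on_subset) (use xb in auto)
  from integral_has_real_derivative[OF this, of x] xb
  have "((\<lambda>t. integral {0..t} f) has_real_derivative f x) (at x within {0..b})" by auto
  then have "((\<lambda>t. integral {0..t} f) has_real_derivative f x) (at x within {0<..<b})"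
    by (rule DERIV_subset) auto
  moreover have "at x within {0<..<b} = at x" by (rule at_within_open) (use xb in auto)
  ultimately show ?thesis by simp
qed

lemma intcont:
  fixes f :: "real \<Rightarrow> real"
  assumes "continuous_on {0..<T} f" "t \<in> {0..<T}"
  shows "continuous_on {0..t} (\<lambda>s. integral {0..s} f)"
proof -
  have "continuous_on {0..t} f" using assms(1) by (rule continuous_on_subset) (use assms(2) in auto)
  then show ?thesis by (intro indefinite_integral_continuous_1 integrable_continuous_real)
qed

lemma const0:
  fixes f :: "real \<Rightarrow> real"
  assumes "\<forall>t\<in>{0..<T}. continuous_on {0..t} f"
    "\<forall>x\<in>{0<..<T}. (f has_real_derivative 0) (at x)" "t \<in> {0..<T}"
  shows "f t = f 0"
proof (cases "t = 0")
  case False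
  then have "0 < t" using assms(3) by auto
  then show ?thesis
    using assms by (intro DERIV_isconst_end) auto
qed simp

lemma deriv_open:
  fixes f :: "real \<Rightarrow> real"
  assumes "(f has_real_derivative D) (at x within {0..<T})" "x \<in> {0<..<T}"
  shows "(f has_real_derivative D) (at x)"
proof -
  have "(f has_real_derivative D) (at x within {0<..<T})" using assms(1) by (rule DERIV_subset) auto
  moreover have "at x within {0<..<T} = at x" by (rule at_within_open) (use assms in auto)
  ultimately show ?thesis by simp
qed

lemma cont_of_deriv:
  fixes f :: "real \<Rightarrow> real"
  assumes "\<forall>t\<in>{0..<T}. \<exists>D. (f has_real_derivative D) (at t within {0..<T})"
  shows "continuous_on {0..<T} f"
  unfolding continuous_on_eq_continuous_within
  using assms DERIV_continuous by blast



lemma logcontra: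
  fixes r :: "real \<Rightarrow> real"
  assumes "t0 < T" "a > 0"
    and d: "\<forall>x\<in>{t0..<T}. \<exists>D. (r has_real_derivative D) (at x) \<and> D \<le> - a / (T - x)"
    and p: "\<forall>x\<in>{t0..<T}. r x > 0"
  shows False
proof -
  define e where "e = exp (- (r t0 + 1) / a)"
  define t where "t = T - (T - t0) * e"
  have rt0: "r t0 > 0" using p assms(1) by auto
  have e0: "0 < e" "e < 1" using rt0 assms(2) by (auto simp: e_def divide_neg_pos)
  have "(T - t0) * e < (T - t0) * 1" using e0 assms(1) by (intro mult_strict_left_mono) auto
  then have tt1: "t0 < t" unfolding t_def by (simp add: algebra_simps)
  have "(T - t0) * e > 0" using e0 assms(1) by simp
  then have tt: "t0 < t" "t < T" using tt1 unfolding t_def by linarith+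
  have A: "r t - a * ln (T - t) \<le> r t0 - a * ln (T - t0)"
  proof (rule DERIV_nonpos_imp_nonincreasing[where f = "\<lambda>s. r s - a * ln (T - s)"])
    show "t0 \<le> t" using tt by simp
    fix x assume x: "t0 \<le> x" "x \<le> t"
    then obtain D where D: "(r has_real_derivative D) (at x)" "D \<le> - a / (T - x)"
      using d tt by force
    have Tx: "T - x > 0" using x tt by simp
    have "((\<lambda>s. r s - a * ln (T - s)) has_real_derivative D - a * (- 1 / (T - x))) (at x)"
      by (rule derivative_eq_intros D(1) refl | use Tx in simp)+
    moreover have "D - a * (- 1 / (T - x)) \<le> 0" using D(2) by simp
    ultimately show "\<exists>y. ((\<lambda>s. r s - a * ln (T - s)) has_real_derivative y) (at x) \<and> y \<le> 0" by blast
  qed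
  have L: "ln (T - t) = ln (T - t0) + (- (r t0 + 1) / a)"
    using e0 assms(1) by (simp add: t_def ln_mult e_def)
  have "r t \<le> r t0 + a * (ln (T - t) - ln (T - t0))" using A by (simp add: right_diff_distrib)
  also have "a * (ln (T - t) - ln (T - t0)) = - (r t0 + 1)" using assms(2) L by simp
  finally have "r t \<le> -1" by simp
  moreover have "r t > 0" using p tt by auto
  ultimately show False by simp
qed



lemma blowdown:
  fixes lam q U :: "real \<Rightarrow> real" and T C :: real
  assumes T0: "T > 0" and C0: "C \<ge> 0"
    and dl: "\<forall>x\<in>{0<..<T}. (lam has_real_derivative (- ((lam x)^2) + q x)) (at x)"
    and qb: "\<forall>x\<in>{0<..<T}. q x \<ge> -C"
    and lim: "filterlim lam at_bot (at_left T)"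
    and dU: "\<forall>x\<in>{0<..<T}. (U has_real_derivative lam x * U x) (at x)"
    and Upos: "\<forall>x\<in>{0..<T}. U x > 0"
  shows "\<exists>t0 K. 0 < t0 \<and> t0 < T \<and> K > 0 \<and> (\<forall>t\<in>{t0..<T}. K / (T - t) \<le> 1 / (U t)^2)"
proof -
  have ev1: "eventually (\<lambda>x. lam x \<le> -(C+1)) (at_left T)"
    using lim unfolding filterlim_at_bot by blast
  have ev2: "eventually (\<lambda>x. x \<in> {0<..<T}) (at_left T)"
    using eventually_at_left_real[OF T0] .
  have "eventually (\<lambda>x. lam x \<le> -(C+1) \<and> x \<in> {0<..<T}) (at_left T)"
    using ev1 ev2 by (rule eventually_conj)
  then have "\<exists>b<T. \<forall>y>b. y < T \<longrightarrow> lam y \<le> -(C+1) \<and> y \<in> {0<..<T}"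
    using eventually_at_left[of 0 T] T0 by simp
  then obtain b where b: "b < T" "\<And>y. b < y \<Longrightarrow> y < T \<Longrightarrow> lam y \<le> -(C+1) \<and> y \<in> {0<..<T}"
    by blast
  define t0 where "t0 = (b + T) / 2"
  have t0: "b < t0" "t0 < T" using b(1) by (auto simp: t0_def)
  have big: "lam y \<le> -(C+1)" "0 < y" "y < T" if "t0 \<le> y" "y < T" for y
    using b(2)[of y] t0 that by auto
  have t0pos: "0 < t0" using big(2)[of t0] t0 by simp
  have lim2: "((\<lambda>s. inverse (- lam s)) \<longlongrightarrow> 0) (at_left T)"
  proof (rule tendsto_inverse_0_at_top)
    show "filterlim (\<lambda>s. - lam s) at_top (at_left T)"
      unfolding filterlim_uminus_at_top using lim by simp
  qed
  have rate: "1 \<le> 2 * (T - t) * (- lam t)" if t: "t0 \<le> t" "t < T" for t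
  proof -
    define g where "g s = inverse (- lam s) + 2 * s" for s
    have mono: "g t \<le> g s" if s: "t \<le> s" "s < T" for s
    proof (rule DERIV_nonneg_imp_nondecreasing[where f = g])
      show "t \<le> s" using s by simp
      fix x assume x: "t \<le> x" "x \<le> s"
      then have xb: "lam x \<le> -(C+1)" "0 < x" "x < T" using big[of x] t s by auto
      have ln0: "lam x \<noteq> 0" using xb C0 by auto
      have a: "((\<lambda>s. - lam s) has_real_derivative - (- ((lam x)^2) + q x)) (at x)"
        using dl xb by (intro DERIV_minus) auto
      have b: "((\<lambda>s. inverse (- lam s)) has_real_derivative
          - (- (- ((lam x)^2) + q x) * inverse ((- lam x) ^ Suc (Suc 0)))) (at x)"
        by (rule DERIV_inverse_fun[OF a]) (use ln0 in simp)
      have c: "((\<lambda>s. 2 * s) has_real_derivative 2 * 1) (at x)"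
        by (rule DERIV_cmult[OF DERIV_ident])
      have "(g has_real_derivative ((- ((lam x)^2) + q x) / (lam x)^2 + 2)) (at x)"
        unfolding g_def
        by (rule DERIV_cong[OF DERIV_add[OF b c]]) (use ln0 in \<open>simp add: field_simps power2_eq_square\<close>)
      moreover have "(- ((lam x)^2) + q x) / (lam x)^2 + 2 \<ge> 0"
      proof -
        have "(C+1)^2 \<le> (- lam x)^2" using xb C0 by (intro power_mono) auto
        then have "(lam x)^2 \<ge> (C+1)^2" by simp
        moreover have "(C+1)^2 \<ge> C" using C0 by (simp add: power2_eq_square algebra_simps)
        moreover have "q x \<ge> -C" using qb xb by auto
        ultimately have "(lam x)^2 + q x \<ge> 0" by linarith
        moreover have "(- ((lam x)^2) + q x) / (lam x)^2 + 2 = ((lam x)^2 + q x) / (lam x)^2"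
          using ln0 by (simp add: field_simps)
        ultimately show ?thesis by simp
      qed
      ultimately show "\<exists>y. (g has_real_derivative y) (at x) \<and> 0 \<le> y" by blast
    qed
    have "(g \<longlongrightarrow> 0 + 2 * T) (at_left T)"
      unfolding g_def by (intro tendsto_intros lim2)
    moreover have "eventually (\<lambda>s. g t \<le> g s) (at_left T)"
      using eventually_at_left_real[OF t(2)] by eventually_elim (auto intro: mono)
    ultimately have "g t \<le> 0 + 2 * T"
      by (intro tendsto_lowerbound) auto
    then have "inverse (- lam t) \<le> 2 * (T - t)" by (simp add: g_def algebra_simps)
    moreover have "- lam t > 0" using big[OF t] C0 by linarith
    ultimately show ?thesis by (simp add: field_simps)
  qed
  define h where "h s = (T - s) / (U s)^2" for s
  have hmono: "h t0 \<le> h t" if t: "t0 \<le> t" "t < T" for t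
  proof (rule DERIV_nonneg_imp_nondecreasing[where f = h])
    show "t0 \<le> t" using t by simp
    fix x assume x: "t0 \<le> x" "x \<le> t"
    then have xb: "0 < x" "x < T" "t0 \<le> x" using big[of x] t by auto
    have U0: "U x > 0" using Upos xb by auto
    have a: "((\<lambda>s. T - s) has_real_derivative 0 - 1) (at x)"
      by (rule DERIV_diff[OF DERIV_const DERIV_ident])
    have b: "((\<lambda>s. (U s)^2) has_real_derivative of_nat 2 * ((lam x * U x) * U x ^ (2 - Suc 0))) (at x)"
      using dU xb by (intro DERIV_power) auto
    have "(h has_real_derivative ((-1 - 2 * (T - x) * lam x) / (U x)^2)) (at x)"
      unfolding h_def
      by (rule DERIV_cong[OF DERIV_divide[OF a b]]) (use U0 in \<open>simp_all add: field_simps power2_eq_square\<close>)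
    moreover have "(-1 - 2 * (T - x) * lam x) / (U x)^2 \<ge> 0"
      using rate[of x] xb U0 by (intro divide_nonneg_pos) auto
    ultimately show "\<exists>y. (h has_real_derivative y) (at x) \<and> 0 \<le> y" by blast
  qed
  have "U t0 > 0" using Upos t0 t0pos by auto
  then have K0: "h t0 > 0" using t0 by (auto simp: h_def)
  show ?thesis
  proof (intro exI conjI ballI)
    show "0 < t0" "t0 < T" "0 < h t0" using t0pos t0 K0 by auto
    fix t assume "t \<in> {t0..<T}"
    then have t: "t0 \<le> t" "t < T" by auto
    have "h t0 \<le> (T - t) / (U t)^2" using hmono[OF t] by (simp add: h_def)
    then show "h t0 / (T - t) \<le> 1 / (U t)^2" using t by (simp add: field_simps)
  qed
qed



lemma posbound:
  fixes lam U :: "real \<Rightarrow> real" and T :: real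
  assumes T0: "T > 0"
    and lim: "filterlim lam at_top (at_left T)"
    and dU: "\<forall>x\<in>{0<..<T}. (U has_real_derivative lam x * U x) (at x)"
    and Upos: "\<forall>x\<in>{0..<T}. U x > 0"
  shows "\<exists>t1 m. 0 < t1 \<and> t1 < T \<and> m > 0 \<and> (\<forall>t\<in>{t1..<T}. m \<le> U t)"
proof -
  have ev1: "eventually (\<lambda>x. 0 \<le> lam x) (at_left T)"
    using lim unfolding filterlim_at_top by blast
  have "eventually (\<lambda>x. 0 \<le> lam x \<and> x \<in> {0<..<T}) (at_left T)"
    using ev1 eventually_at_left_real[OF T0] by (rule eventually_conj)
  then have "\<exists>b<T. \<forall>y>b. y < T \<longrightarrow> 0 \<le> lam y \<and> y \<in> {0<..<T}"
    using eventually_at_left[of 0 T] T0 by simp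
  then obtain b where b: "b < T" "\<And>y. b < y \<Longrightarrow> y < T \<Longrightarrow> 0 \<le> lam y \<and> y \<in> {0<..<T}"
    by blast
  define t1 where "t1 = (b + T) / 2"
  have t1: "b < t1" "t1 < T" using b(1) by (auto simp: t1_def)
  have t1pos: "0 < t1" using b(2)[of t1] t1 by auto
  show ?thesis
  proof (intro exI conjI ballI)
    show "0 < t1" "t1 < T" "0 < U t1" using t1pos t1 Upos by auto
    fix t assume "t \<in> {t1..<T}"
    then have t: "t1 \<le> t" "t < T" by auto
    show "U t1 \<le> U t"
    proof (rule DERIV_nonneg_imp_nondecreasing[where f = U])
      show "t1 \<le> t" using t by simp
      fix x assume x: "t1 \<le> x" "x \<le> t"
      then have xb: "0 \<le> lam x" "x \<in> {0<..<T}" using b(2)[of x] t1 t by auto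
      then have "U x > 0" using Upos by auto
      then show "\<exists>y. (U has_real_derivative y) (at x) \<and> 0 \<le> y"
        using dU xb by (intro exI[of _ "lam x * U x"]) auto
    qed
  qed
qed



theorem lemma3p1:
  fixes n J1 J2 :: nat and k cb rho0 tB :: real
    and lam0 :: "nat \<Rightarrow> real" and lam :: "nat \<Rightarrow> real \<Rightarrow> real" and rho :: "real \<Rightarrow> real"
  assumes "n \<ge> 2" and "k > 0" and "cb > 0" and "rho0 > 0"
    and "\<forall>i j. 1 \<le> i \<longrightarrow> i \<le> j \<longrightarrow> j \<le> n \<longrightarrow> lam0 i \<le> lam0 j"
    and "0 < tB"
    and "maximal_solution n k cb rho0 lam0 tB lam rho"
    and "1 \<le> J1" and "J1 \<le> J2" and "J2 \<le> n"
    and "\<forall>i\<in>{1..J1}. filterlim (lam i) at_bot (at_left tB)"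
    and "\<forall>i\<in>{J2<..n}. filterlim (lam i) at_top (at_left tB)"
  shows "(\<forall>i\<in>{1..J1}. \<forall>j\<in>{1..J1}. lam0 i = lam0 j \<and> (\<forall>t\<in>{0..<tB}. lam i t = lam j t))
    \<and> (\<forall>i\<in>{J2<..n}. \<forall>j\<in>{J2<..n}. ((\<lambda>t. lam i t / lam j t) \<longlongrightarrow> 1) (at_left tB))
    \<and> (\<forall>j\<in>{J2<..<n}. ((\<lambda>t. u_fun lam j t / u_fun lam n t) \<longlongrightarrow>
          (lam0 j - lam0 1) / (lam0 n - lam0 1)) (at_left tB))"
proof -
  note T0 = assms(6)
  define q where "q t = (k / real n) * (rho t - cb)" for t
  define U where "U = u_fun lam"
  have sol: "is_solution n k cb rho0 lam0 tB lam rho"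
    using assms(7) by (simp add: maximal_solution_def)
  have r0: "rho 0 = rho0" and l0: "\<forall>i\<in>{1..n}. lam i 0 = lam0 i"
    and dw: "\<forall>t\<in>{0..<tB}.
        (\<forall>i\<in>{1..n}. (lam i has_real_derivative (- ((lam i t) ^ 2) + q t)) (at t within {0..<tB})) \<and>
        (rho has_real_derivative (- rho t * (\<Sum>i=1..n. lam i t))) (at t within {0..<tB})"
    using sol by (auto simp: is_solution_def q_def)
  have contlam: "continuous_on {0..<tB} (lam i)" if "i \<in> {1..n}" for i
    using dw that by (intro cont_of_deriv) blast
  have controh: "continuous_on {0..<tB} rho"
    using dw by (intro cont_of_deriv) blast
  have dlam: "(lam i has_real_derivative (- ((lam i x) ^ 2) + q x)) (at x)"
    if "i \<in> {1..n}" "x \<in> {0<..<tB}" for i x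
    using dw that by (intro deriv_open) auto
  have drho: "(rho has_real_derivative (- rho x * (\<Sum>i=1..n. lam i x))) (at x)"
    if "x \<in> {0<..<tB}" for x
    using dw that by (intro deriv_open) auto
  have dU: "(U i has_real_derivative lam i x * U i x) (at x)"
    if "i \<in> {1..n}" "x \<in> {0<..<tB}" for i x
  proof -
    have "((\<lambda>t. exp (integral {0..t} (lam i))) has_real_derivative
        exp (integral {0..x} (lam i)) * lam i x) (at x)"
      by (rule DERIV_fun_exp[OF intder[OF contlam[OF that(1)] that(2)]])
    then show ?thesis by (simp add: U_def u_fun_def[abs_def] mult.commute)
  qed
  have contU: "continuous_on {0..t} (U i)" if "i \<in> {1..n}" "t \<in> {0..<tB}" for i t
    unfolding U_def u_fun_def[abs_def]
    by (intro continuous_on_exp intcont[OF contlam[OF that(1)] that(2)])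
  have Upos: "U i t > 0" for i t by (simp add: U_def u_fun_def)
  have U0: "U i 0 = 1" for i by (simp add: U_def u_fun_def)
  define Lam where "Lam s = (\<Sum>i=1..n. lam i s)" for s
  have contLam: "continuous_on {0..<tB} Lam"
    unfolding Lam_def[abs_def] using contlam by (intro continuous_on_sum) auto
  define P where "P s = rho s * exp (integral {0..s} Lam)" for s
  have Pc: "P t = P 0" if "t \<in> {0..<tB}" for t
  proof (rule const0[of tB])
    show "t \<in> {0..<tB}" by fact
    show "\<forall>t\<in>{0..<tB}. continuous_on {0..t} P"
    proof
      fix t assume t: "t \<in> {0..<tB}"
      have "continuous_on {0..t} rho" using controh by (rule continuous_on_subset) (use t in auto)
      then show "continuous_on {0..t} P" unfolding P_def[abs_def]
        by (intro continuous_on_mult continuous_on_exp intcont[OF contLam t])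
    qed
    show "\<forall>x\<in>{0<..<tB}. (P has_real_derivative 0) (at x)"
    proof
      fix x assume x: "x \<in> {0<..<tB}"
      have "(P has_real_derivative (- rho x * Lam x) * exp (integral {0..x} Lam)
          + (exp (integral {0..x} Lam) * Lam x) * rho x) (at x)"
        unfolding P_def[abs_def]
        by (rule DERIV_mult[OF drho[OF x, folded Lam_def] DERIV_fun_exp[OF intder[OF contLam x]]])
      then show "(P has_real_derivative 0) (at x)" by (simp add: algebra_simps)
    qed
  qed
  have rhopos: "rho t > 0" if "t \<in> {0..<tB}" for t
  proof -
    have "P t = rho0" using Pc[OF that] r0 by (simp add: P_def)
    then have "rho t * exp (integral {0..t} Lam) > 0" using assms(4) by (simp add: P_def)
    then show ?thesis by (simp add: zero_less_mult_iff)
  qed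
  define C where "C = k * cb / real n"
  have C0: "C \<ge> 0" using assms(2,3) by (simp add: C_def)
  have qb: "\<forall>x\<in>{0<..<tB}. q x \<ge> - C"
  proof
    fix x assume x: "x \<in> {0<..<tB}"
    then have "rho x > 0" using rhopos by auto
    then have "k / real n * (rho x - cb) \<ge> k / real n * (0 - cb)"
      using assms(2) by (intro mult_left_mono) auto
    then show "q x \<ge> - C" by (simp add: q_def C_def)
  qed
  have Did: "U i t * U j t * (lam j t - lam i t) = lam0 j - lam0 i"
    if ij: "i \<in> {1..n}" "j \<in> {1..n}" and t: "t \<in> {0..<tB}" for i j t
  proof -
    define D where "D s = U i s * U j s * (lam j s - lam i s)" for s
    have "D t = D 0"
    proof (rule const0[of tB])
      show "t \<in> {0..<tB}" by fact
      show "\<forall>t\<in>{0..<tB}. continuous_on {0..t} D"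
      proof
        fix t assume t: "t \<in> {0..<tB}"
        have "continuous_on {0..t} (lam i)" using contlam[OF ij(1)] by (rule continuous_on_subset) (use t in auto)
        moreover have "continuous_on {0..t} (lam j)" using contlam[OF ij(2)] by (rule continuous_on_subset) (use t in auto)
        ultimately show "continuous_on {0..t} D" unfolding D_def[abs_def]
          using contU[OF ij(1) t] contU[OF ij(2) t] by (intro continuous_intros) auto
      qed
      show "\<forall>x\<in>{0<..<tB}. (D has_real_derivative 0) (at x)"
      proof
        fix x assume x: "x \<in> {0<..<tB}"
        have "(D has_real_derivative
            ((lam i x * U i x) * U j x + (lam j x * U j x) * U i x) * (lam j x - lam i x)
            + ((- ((lam j x) ^ 2) + q x) - (- ((lam i x) ^ 2) + q x)) * (U i x * U j x)) (at x)"
          unfolding D_def[abs_def]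
          by (intro DERIV_mult DERIV_diff dU dlam ij x)
        then show "(D has_real_derivative 0) (at x)"
          by (rule DERIV_cong) (simp add: algebra_simps power2_eq_square)
      qed
    qed
    then show ?thesis using l0 ij by (simp add: D_def U0)
  qed
  have bd: "\<exists>t0 K. 0 < t0 \<and> t0 < tB \<and> K > 0 \<and> (\<forall>t\<in>{t0..<tB}. K / (tB - t) \<le> 1 / (U i t)^2)"
    if "i \<in> {1..n}" "filterlim (lam i) at_bot (at_left tB)" for i
    using that dlam[OF that(1)] by (intro blowdown[OF T0 C0 _ qb]) (auto intro: dU Upos)
  have pb: "\<exists>t1 m. 0 < t1 \<and> t1 < tB \<and> m > 0 \<and> (\<forall>t\<in>{t1..<tB}. m \<le> U i t)"
    if "i \<in> {1..n}" "filterlim (lam i) at_top (at_left tB)" for i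
    using that by (intro posbound[OF T0]) (auto intro: dU Upos)
  have noord: False if ab: "a \<in> {1..J1}" "b \<in> {1..J1}" and lt: "lam0 a < lam0 b" for a b
  proof -
    have abn: "a \<in> {1..n}" "b \<in> {1..n}" using ab assms(9,10) by auto
    obtain t0 K where tK: "0 < t0" "t0 < tB" "K > 0" "\<forall>t\<in>{t0..<tB}. K / (tB - t) \<le> 1 / (U b t)^2"
      using bd[OF abn(2)] assms(11) ab(2) by blast
    define c where "c = lam0 b - lam0 a"
    have c0: "c > 0" using lt by (simp add: c_def)
    show False
    proof (rule logcontra[of t0 tB "c * K" "\<lambda>t. U a t / U b t"])
      show "t0 < tB" "0 < c * K" using tK c0 by auto
      show "\<forall>x\<in>{t0..<tB}. 0 < U a x / U b x" using Upos by auto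
      show "\<forall>x\<in>{t0..<tB}. \<exists>D. ((\<lambda>t. U a t / U b t) has_real_derivative D) (at x) \<and> D \<le> - (c * K) / (tB - x)"
      proof
        fix x assume x: "x \<in> {t0..<tB}"
        then have x': "x \<in> {0<..<tB}" "x \<in> {0..<tB}" using tK by auto
        have d: "((\<lambda>t. U a t / U b t) has_real_derivative
            ((lam a x * U a x) * U b x - U a x * (lam b x * U b x)) / (U b x * U b x)) (at x)"
          by (rule DERIV_divide[OF dU[OF abn(1) x'(1)] dU[OF abn(2) x'(1)]]) (use Upos in \<open>simp add: less_imp_neq[symmetric]\<close>)
        have "((lam a x * U a x) * U b x - U a x * (lam b x * U b x)) / (U b x * U b x)
            = - (U a x * U b x * (lam b x - lam a x)) / (U b x)^2"
          by (simp add: algebra_simps power2_eq_square)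
        also have "\<dots> = - c / (U b x)^2" using Did[OF abn x'(2)] by (simp add: c_def)
        also have "\<dots> \<le> - (c * K) / (tB - x)"
        proof -
          have "c * (K / (tB - x)) \<le> c * (1 / (U b x)^2)"
            using tK(4) x c0 by (intro mult_left_mono) auto
          then show ?thesis by simp
        qed
        finally show "\<exists>D. ((\<lambda>t. U a t / U b t) has_real_derivative D) (at x) \<and> D \<le> - (c * K) / (tB - x)"
          using d by blast
      qed
    qed
  qed
  have claim1: "\<forall>i\<in>{1..J1}. \<forall>j\<in>{1..J1}. lam0 i = lam0 j \<and> (\<forall>t\<in>{0..<tB}. lam i t = lam j t)"
  proof (intro ballI conjI)
    fix i j assume ij: "i \<in> {1..J1}" "j \<in> {1..J1}"
    show eq: "lam0 i = lam0 j" using noord[OF ij] noord[OF ij(2,1)] by fastforce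
    fix t assume t: "t \<in> {0..<tB}"
    have ijn: "i \<in> {1..n}" "j \<in> {1..n}" using ij assms(9,10) by auto
    have "U i t * U j t * (lam j t - lam i t) = 0" using Did[OF ijn t] eq by simp
    then show "lam i t = lam j t" using Upos[of i t] Upos[of j t] by simp
  qed
  have claim2: "\<forall>i\<in>{J2<..n}. \<forall>j\<in>{J2<..n}. ((\<lambda>t. lam i t / lam j t) \<longlongrightarrow> 1) (at_left tB)"
  proof (intro ballI)
    fix i j assume ij: "i \<in> {J2<..n}" "j \<in> {J2<..n}"
    have ijn: "i \<in> {1..n}" "j \<in> {1..n}" using ij assms(8,9) by auto
    have li: "filterlim (lam i) at_top (at_left tB)" and lj: "filterlim (lam j) at_top (at_left tB)"
      using assms(12) ij by auto
    obtain t1 m1 where A: "0 < t1" "t1 < tB" "m1 > 0" "\<forall>t\<in>{t1..<tB}. m1 \<le> U i t"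
      using pb[OF ijn(1) li] by blast
    obtain t2 m2 where B: "0 < t2" "t2 < tB" "m2 > 0" "\<forall>t\<in>{t2..<tB}. m2 \<le> U j t"
      using pb[OF ijn(2) lj] by blast
    define c where "c = lam0 j - lam0 i"
    define f where "f t = c / (U i t * U j t * lam j t)" for t
    have ev: "eventually (\<lambda>t. t \<in> {max t1 t2<..<tB} \<and> 1 \<le> lam j t) (at_left tB)"
    proof (rule eventually_conj)
      show "eventually (\<lambda>t. t \<in> {max t1 t2<..<tB}) (at_left tB)"
        using A B by (intro eventually_at_left_real) auto
      show "eventually (\<lambda>t. 1 \<le> lam j t) (at_left tB)"
        using lj unfolding filterlim_at_top by blast
    qed
    have f0: "(f \<longlongrightarrow> 0) (at_left tB)"
    proof (rule Lim_null_comparison)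
      have "((\<lambda>t. \<bar>c\<bar> / (m1 * m2) * inverse (lam j t)) \<longlongrightarrow> \<bar>c\<bar> / (m1 * m2) * 0) (at_left tB)"
        by (intro tendsto_intros tendsto_inverse_0_at_top lj)
      then show "((\<lambda>t. \<bar>c\<bar> / (m1 * m2) * inverse (lam j t)) \<longlongrightarrow> 0) (at_left tB)" by simp
      show "\<forall>\<^sub>F t in at_left tB. norm (f t) \<le> \<bar>c\<bar> / (m1 * m2) * inverse (lam j t)"
        using ev
      proof eventually_elim
        case (elim t)
        then have t: "t1 \<le> t" "t2 \<le> t" "t < tB" "1 \<le> lam j t" by auto
        have m1u: "m1 \<le> U i t" and m2u: "m2 \<le> U j t" using A(4) B(4) t by auto
        have "m1 * m2 * lam j t \<le> U i t * U j t * lam j t"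
          using m1u m2u A(3) B(3) t(4) by (intro mult_right_mono mult_mono) auto
        moreover have "0 < m1 * m2 * lam j t" using A(3) B(3) t(4) by simp
        ultimately have "\<bar>c\<bar> / (U i t * U j t * lam j t) \<le> \<bar>c\<bar> / (m1 * m2 * lam j t)"
          by (intro divide_left_mono) auto
        moreover have "norm (f t) = \<bar>c\<bar> / (U i t * U j t * lam j t)"
          using Upos[of i t] Upos[of j t] t(4) by (simp add: f_def abs_mult)
        ultimately show ?case by (simp add: field_simps)
      qed
    qed
    have lim1: "((\<lambda>t. 1 - f t) \<longlongrightarrow> 1) (at_left tB)"
      using tendsto_diff[OF tendsto_const f0, of 1] by simp
    show "((\<lambda>t. lam i t / lam j t) \<longlongrightarrow> 1) (at_left tB)"
    proof (rule Lim_transform_eventually[OF lim1])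
      show "\<forall>\<^sub>F t in at_left tB. 1 - f t = lam i t / lam j t"
        using ev
      proof eventually_elim
        case (elim t)
        then have t: "t \<in> {0..<tB}" "1 \<le> lam j t" using A B by auto
        have Q: "U i t * U j t > 0" using Upos[of i t] Upos[of j t] by simp
        have "c = (U i t * U j t) * (lam j t - lam i t)"
          using Did[OF ijn t(1)] by (simp add: c_def)
        then have "c / (U i t * U j t) = lam j t - lam i t" using Q Upos[of i t] Upos[of j t] by simp
        then have e: "lam i t = lam j t - c / (U i t * U j t)" by simp
        have M: "lam j t \<noteq> 0" using t(2) by simp
        show ?case unfolding f_def e using Q M by (simp add: field_simps)
      qed
    qed
  qed
  have claim3: "\<forall>j\<in>{J2<..<n}. ((\<lambda>t. U j t / U n t) \<longlongrightarrow>
          (lam0 j - lam0 1) / (lam0 n - lam0 1)) (at_left tB)"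
  proof
    fix j assume j: "j \<in> {J2<..<n}"
    have jn: "j \<in> {1..n}" "n \<in> {1..n}" "(1::nat) \<in> {1..n}" using j assms(1,8,9) by auto
    have l1: "filterlim (lam 1) at_bot (at_left tB)" using assms(8,11) by auto
    have ln: "filterlim (lam n) at_top (at_left tB)" using assms(12) j by auto
    define an where "an = lam0 n - lam0 1"
    define aj where "aj = lam0 j - lam0 1"
    have an0: "an \<noteq> 0"
    proof
      assume a: "an = 0"
      have "eventually (\<lambda>t. False) (at_left tB)"
      proof -
        have "eventually (\<lambda>t. t \<in> {0<..<tB}) (at_left tB)" using eventually_at_left_real[OF T0] .
        moreover have "eventually (\<lambda>t. lam 1 t \<le> -1) (at_left tB)" using l1 unfolding filterlim_at_bot by blast
        moreover have "eventually (\<lambda>t. 1 \<le> lam n t) (at_left tB)" using ln unfolding filterlim_at_top by blast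
        ultimately show ?thesis
        proof eventually_elim
          case (elim t)
          then have t: "t \<in> {0..<tB}" by auto
          have "U 1 t * U n t * (lam n t - lam 1 t) = 0" using Did[OF jn(3,2) t] a by (simp add: an_def)
          then have "lam n t = lam 1 t" using Upos[of 1 t] Upos[of n t] by simp
          then show False using elim by simp
        qed
      qed
      then show False by simp
    qed
    obtain t0 K where tK: "0 < t0" "t0 < tB" "K > 0" "\<forall>t\<in>{t0..<tB}. K / (tB - t) \<le> 1 / (U 1 t)^2"
      using bd[OF jn(3) l1] by blast
    obtain t1 m where tm: "0 < t1" "t1 < tB" "m > 0" "\<forall>t\<in>{t1..<tB}. m \<le> U n t"
      using pb[OF jn(2) ln] by blast
    have ratio0: "((\<lambda>t. U 1 t / U n t) \<longlongrightarrow> 0) (at_left tB)"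
    proof (rule Lim_null_comparison)
      have "((\<lambda>t. sqrt ((tB - t) / K) / m) \<longlongrightarrow> sqrt ((tB - tB) / K) / m) (at_left tB)"
        using tK(3) tm(3) by (intro tendsto_intros) auto
      then show "((\<lambda>t. sqrt ((tB - t) / K) / m) \<longlongrightarrow> 0) (at_left tB)" by simp
      have "eventually (\<lambda>t. t \<in> {max t0 t1<..<tB}) (at_left tB)"
        using tK tm by (intro eventually_at_left_real) auto
      then show "\<forall>\<^sub>F t in at_left tB. norm (U 1 t / U n t) \<le> sqrt ((tB - t) / K) / m"
      proof eventually_elim
        case (elim t)
        then have t: "t0 \<le> t" "t1 \<le> t" "t < tB" by auto
        have u1: "U 1 t > 0" "U n t > 0" using Upos by auto
        have "K / (tB - t) \<le> 1 / (U 1 t)^2" using tK(4) t by auto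
        then have "(U 1 t)^2 \<le> (tB - t) / K" using t tK(3) u1 by (simp add: field_simps)
        then have "sqrt ((U 1 t)^2) \<le> sqrt ((tB - t) / K)" by (rule real_sqrt_le_mono)
        then have s: "U 1 t \<le> sqrt ((tB - t) / K)" using u1 by simp
        have "U 1 t / U n t \<le> U 1 t / m" using tm(3,4) t u1 by (intro divide_left_mono) auto
        also have "\<dots> \<le> sqrt ((tB - t) / K) / m" using s tm(3) by (intro divide_right_mono) auto
        finally show ?case using u1 by simp
      qed
    qed
    have lim: "((\<lambda>t. aj / an + (an - aj) / an * (U 1 t / U n t)) \<longlongrightarrow> aj / an + (an - aj) / an * 0) (at_left tB)"
      by (rule tendsto_add[OF tendsto_const tendsto_mult[OF tendsto_const ratio0]])
    show "((\<lambda>t. U j t / U n t) \<longlongrightarrow> (lam0 j - lam0 1) / (lam0 n - lam0 1)) (at_left tB)"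
    proof (rule Lim_transform_eventually)
      show "((\<lambda>t. aj / an + (an - aj) / an * (U 1 t / U n t)) \<longlongrightarrow> (lam0 j - lam0 1) / (lam0 n - lam0 1)) (at_left tB)"
        using lim by (simp add: aj_def an_def)
      show "\<forall>\<^sub>F t in at_left tB. aj / an + (an - aj) / an * (U 1 t / U n t) = U j t / U n t"
        using eventually_at_left_real[OF T0]
      proof eventually_elim
        case (elim t)
        then have t: "t \<in> {0..<tB}" by auto
        have e1: "U 1 t * U j t * (lam j t - lam 1 t) = aj" using Did[OF jn(3,1) t] by (simp add: aj_def)
        have e2: "U 1 t * U n t * (lam n t - lam 1 t) = an" using Did[OF jn(3,2) t] by (simp add: an_def)
        have e3: "U j t * U n t * (lam n t - lam j t) = an - aj" using Did[OF jn(1,2) t] by (simp add: an_def aj_def)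
        have key: "an * U j t - aj * U n t = (an - aj) * U 1 t"
        proof -
          have "an * U j t - aj * U n t = (U 1 t * U n t * (lam n t - lam 1 t)) * U j t
              - (U 1 t * U j t * (lam j t - lam 1 t)) * U n t" using e1 e2 by simp
          also have "\<dots> = (U j t * U n t * (lam n t - lam j t)) * U 1 t" by (simp add: algebra_simps)
          also have "\<dots> = (an - aj) * U 1 t" using e3 by simp
          finally show ?thesis .
        qed
        have un: "U n t \<noteq> 0" using Upos[of n t] by simp
        have num: "aj * U n t + (an - aj) * U 1 t = an * U j t"
          by (subst key[symmetric]) simp
        have "aj / an + (an - aj) / an * (U 1 t / U n t) = (aj * U n t + (an - aj) * U 1 t) / (an * U n t)"
          using an0 un by (simp add: field_simps)
        also have "\<dots> = (an * U j t) / (an * U n t)" by (simp only: num)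
        also have "\<dots> = U j t / U n t" using an0 by simp
        finally show ?case .
      qed
    qed
  qed
  show ?thesis unfolding U_def[symmetric] using claim1 claim2 claim3 by blast
qed

end
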